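(* For every base $\mathscr{B}$, finite multisets of atoms $P=[p_1,\dots,p_n]$ and $S$, and atom $q$, the following are equivalent: (1) $P,S\vdash_{\mathscr{B}}q$; (2) for every base $\mathscr{X}\supseteq\mathscr{B}$ and all finite multisets of atoms $T_1,\dots,T_n$, if $T_i\vdash_{\mathscr{X}}p_i$ for all $i=1,\dots,n$, then $T_1,\dots,T_n,S\vdash_{\mathscr{X}}q$.
   Context: Fix a countably infinite set $\mathbb{A}$ of atoms; multisets are finite and "$,$" denotes multiset union. An atomic rule is $(P_1\triangleright p_1,\dots,P_n\triangleright p_n)\Rightarrow p$ ($n\ge0$) with $P_i$ finite multisets of atoms and $p_i,p$ atoms; a base is a set of atomic rules, and $\mathscr{X}\supseteq\mathscr{B}$ means $\mathscr{X}$ contains all rules of $\mathscr{B}$. Derivability $\vdash_{\mathscr{B}}$ is the least relation between finite multisets of atoms and atoms such that (Ref) $[p]\vdash_{\mathscr{B}}p$; (App) if $(P_1\triangleright p_1,\dots,P_n\triangleright p_n)\Rightarrow p\in\mathscr{B}$ and $S_i,P_i\vdash_{\mathscr{B}}p_i$ for $i=1,\dots,n$, then $S_1,\dots,S_n\vdash_{\mathscr{B}}p$. *)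

theory Defs
  imports Main "HOL-Library.Multiset"
begin

type_synonym atom = nat

text \<open>An atomic rule (P1 |> p1, ..., Pn |> pn) => p is a pair of the list of
  premises (Pi, pi) and the conclusion p.\<close>
type_synonym rule = "((atom multiset \<times> atom) list) \<times> atom"

type_synonym base = "rule set"

inductive derives :: "base \<Rightarrow> atom multiset \<Rightarrow> atom \<Rightarrow> bool" where
  Ref: "derives B {#p#} p"
| App: "\<lbrakk> (prems, p) \<in> B; length Ss = length prems;
          \<forall>i < length prems. derives B (Ss ! i + fst (prems ! i)) (snd (prems ! i)) \<rbrakk>
        \<Longrightarrow> derives B (sum_list Ss) p"

end

theory Submission
  imports Defs
begin

lemma derives_mono: "derives B G q \<Longrightarrow> B \<subseteq> X \<Longrightarrow> derives X G q"
proof (induction rule: derives.induct)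
  case (Ref B p) then show ?case by (simp add: derives.Ref)
next
  case (App prems p B Ss)
  then show ?case by (intro derives.App) auto
qed

lemma sum_list_update_ms:
  "j < length xs \<Longrightarrow> sum_list (xs[j := y]) + (xs ! j :: 'a multiset) = sum_list xs + y"
proof (induction xs arbitrary: j)
  case Nil then show ?case by simp
next
  case (Cons a xs) then show ?case by (cases j) (auto simp: add_ac)
qed

lemma sum_list_mem:
  "(p :: 'a) \<in># sum_list (xs :: 'a multiset list) \<Longrightarrow> \<exists>j < length xs. p \<in># xs ! j"
proof (induction xs)
  case Nil then show ?case by simp
next
  case (Cons a xs)
  then show ?case
    by (metis Suc_less_eq length_Cons nth_Cons_0 nth_Cons_Suc sum_list.Cons union_iff zero_less_Suc)
qed

lemma X:
  assumes e: "A + Sj = S0 + (Sj - {#p#} + T)" and pj: "p \<in># (Sj::'a multiset)" and ps: "p \<in># S0"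
  shows "A = S0 - {#p#} + T"
proof (rule multiset_eqI)
  fix x
  have 1: "count A x + count Sj x = count S0 x + (count Sj x - (if x = p then 1 else 0)) + count T x"
    using arg_cong[OF e, of "\<lambda>M. count M x"] by simp
  have 2: "count Sj p \<ge> 1" using pj by (simp add: Suc_le_eq)
  have 3: "count S0 p \<ge> 1" using ps by (simp add: Suc_le_eq)
  show "count A x = count (S0 - {#p#} + T) x"
    proof (cases "x = p")
    case True
    from 1 True have a: "count A p + count Sj p = count S0 p + (count Sj p - 1) + count T p" by simp
    have b: "count (S0 - {#p#} + T) p = count S0 p - 1 + count T p" by simp
    from a b 2 3 have "count A p = count (S0 - {#p#} + T) p" by linarith
    then show ?thesis using True by simp
  next
    case False then show ?thesis using 1 by simp
  qed
qed

lemma cut1: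
  "derives X G q \<Longrightarrow> p \<in># G \<Longrightarrow> derives X T p \<Longrightarrow> derives X (G - {#p#} + T) q"
proof (induction arbitrary: p T rule: derives.induct)
  case (Ref B r) then show ?case by simp
next
  case (App prems r B Ss)
  from sum_list_mem[OF App.prems(1)] obtain j where j: "j < length Ss" "p \<in># Ss ! j" by blast
  define Ss' where "Ss' = Ss[j := Ss ! j - {#p#} + T]"
  have len: "length Ss' = length prems" using App.hyps(2) by (simp add: Ss'_def)
  have all: "\<forall>i < length prems. derives B (Ss' ! i + fst (prems ! i)) (snd (prems ! i))"
  proof (intro allI impI)
    fix i assume i: "i < length prems"
    show "derives B (Ss' ! i + fst (prems ! i)) (snd (prems ! i))"
    proof (cases "i = j")
      case True
      have pj: "p \<in># Ss ! j + fst (prems ! j)" using j by simp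
      have "derives B (Ss ! j + fst (prems ! j) - {#p#} + T) (snd (prems ! j))"
        using App.IH i True pj App.prems(2) by blast
      moreover have "Ss ! j + fst (prems ! j) - {#p#} + T = Ss' ! j + fst (prems ! j)"
      proof -
        have "Ss' ! j = Ss ! j - {#p#} + T" using j(1) by (simp add: Ss'_def)
        moreover have "Ss ! j + fst (prems ! j) - {#p#} = Ss ! j - {#p#} + fst (prems ! j)"
          using j(2) by (simp add: multiset_eq_iff)
        ultimately show ?thesis by (simp add: ac_simps)
      qed
      ultimately show ?thesis using True by simp
    next
      case False
      then have "Ss' ! i = Ss ! i" by (simp add: Ss'_def)
      then show ?thesis using App.IH i by metis
    qed
  qed
  have "derives B (sum_list Ss') r" by (rule derives.App[OF App.hyps(1) len all])
  moreover have "sum_list Ss' = sum_list Ss - {#p#} + T"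
  proof -
    have "sum_list Ss' + Ss ! j = sum_list Ss + (Ss ! j - {#p#} + T)"
      unfolding Ss'_def by (rule sum_list_update_ms[OF j(1)])
    then show ?thesis by (rule X[OF _ j(2) App.prems(1)])
  qed
  ultimately show ?case by simp
qed

lemma cut_list:
  "derives X (mset ps + S) q \<Longrightarrow> length Ts = length ps \<Longrightarrow>
   (\<forall>i < length ps. derives X (Ts ! i) (ps ! i)) \<Longrightarrow> derives X (sum_list Ts + S) q"
proof (induction ps arbitrary: Ts S)
  case Nil then show ?case by simp
next
  case (Cons p ps)
  then obtain T Ts' where Ts: "Ts = T # Ts'" by (cases Ts) auto
  have "derives X (mset ps + (add_mset p S)) q" using Cons.prems(1) by simp
  from Cons.IH[OF this] Cons.prems Ts
  have "derives X (sum_list Ts' + add_mset p S) q" by fastforce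
  moreover have "derives X T p" using Cons.prems(3) Ts by fastforce
  ultimately have "derives X (sum_list Ts' + add_mset p S - {#p#} + T) q"
    by (intro cut1) auto
  then show ?case using Ts by (simp add: add_ac)
qed

theorem proposition2:
  fixes B :: base and ps :: "atom list" and S :: "atom multiset" and q :: atom
  shows "derives B (mset ps + S) q \<longleftrightarrow>
         (\<forall>X :: base. B \<subseteq> X \<longrightarrow>
            (\<forall>Ts :: atom multiset list. length Ts = length ps \<longrightarrow>
               (\<forall>i < length ps. derives X (Ts ! i) (ps ! i)) \<longrightarrow>
               derives X (sum_list Ts + S) q))"
proof
  assume "derives B (mset ps + S) q"
  then show "\<forall>X :: base. B \<subseteq> X \<longrightarrow>
            (\<forall>Ts :: atom multiset list. length Ts = length ps \<longrightarrow>
               (\<forall>i < length ps. derives X (Ts ! i) (ps ! i)) \<longrightarrow>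
               derives X (sum_list Ts + S) q)"
    using derives_mono cut_list by blast
next
  assume H: "\<forall>X :: base. B \<subseteq> X \<longrightarrow>
            (\<forall>Ts :: atom multiset list. length Ts = length ps \<longrightarrow>
               (\<forall>i < length ps. derives X (Ts ! i) (ps ! i)) \<longrightarrow>
               derives X (sum_list Ts + S) q)"
  have "derives B (sum_list (map (\<lambda>p. {#p#}) ps) + S) q"
    using H[rule_format, of B "map (\<lambda>p. {#p#}) ps"] by (simp add: derives.Ref)
  moreover have "sum_list (map (\<lambda>p. {#p#}) ps) = mset ps"
    by (induction ps) (auto simp: add_ac)
  ultimately show "derives B (mset ps + S) q" by simp
qed

end
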